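(* Let $\ell\in\mathbb{Z}_{\ge 2}$, let $b_{n,m}=b_{n,m}(\ell)$ be as in the context, and let $R_{\ell-j}(x)$, $2\le j\le\ell$, be the rational functions defined by $R_{\ell-2}(x)=1$, $R_{\ell-3}(x)=x^{-1}$, $R_{\ell-j}(x)=x^{-1}R_{\ell-j+1}(x)-R_{\ell-j+2}(x)$ for $j>3$. Then for $2\le j\le \ell$ we have $R_{\ell-j}(x)=U_{j-2}\big(\tfrac{1}{2x}\big)$, and consequently $$\sum_{\substack{m\ge0,\ m\equiv \ell-j\bmod\ell\\ n\ge \ell-j}} b_{n,m}x^n \;=\; U_{j-2}\big(\tfrac{1}{2x}\big)\sum_{\substack{m\ge0,\ m\equiv \ell-2\bmod\ell\\ n\ge \ell-2}} b_{n,m}x^n .$$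
   Context: $U_j$ denotes the $j$th Chebyshev polynomial of the second kind: $U_0(x)=1$, $U_1(x)=2x$, $U_j(x)=2xU_{j-1}(x)-U_{j-2}(x)$ for $j\ge 2$. For $n,m\in\mathbb{Z}_{\ge 0}$, $a_{n,m}$ is the number of unit step paths $(x_0,\dots,x_n)$ on $\mathbb{Z}_{\ge0}$ (integers $x_i\ge0$, $|x_i-x_{i-1}|=1$) with $x_0=0$, $x_n=m$. For fixed $\ell\in\mathbb{Z}_{\ge2}$, $b_{n,m}=b_{n,m}(\ell)$ is defined by: $b_{n,m}=a_{n,m}$ if $m\equiv-1\pmod\ell$; $b_{n,m}=b_{n-1,m-1}+b_{n-1,m+1}$ if $m\equiv m_0\pmod\ell$ with $0\le m_0<\ell-2$; $b_{n,m}=b_{n-1,m-1}$ if $m\equiv-2\pmod\ell$; the recursion is used for $n\ge1$ with $b_{0,0}=1$, $b_{0,m}=0$ for $m>0$, and $b_{n,-1}=0$. Identities are of formal power series in $x$. *)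

theory Defs
  imports "HOL-Computational_Algebra.Formal_Laurent_Series"
begin

fun cheb_U :: "nat \<Rightarrow> 'a::comm_ring_1 \<Rightarrow> 'a" where
  "cheb_U 0 x = 1"
| "cheb_U (Suc 0) x = 2 * x"
| "cheb_U (Suc (Suc j)) x = 2 * x * cheb_U (Suc j) x - cheb_U j x"

definition path_count :: "nat \<Rightarrow> nat \<Rightarrow> nat" where
  "path_count n m = card {xs :: int list. length xs = Suc n \<and> xs ! 0 = 0 \<and> xs ! n = int m
      \<and> (\<forall>i\<le>n. xs ! i \<ge> 0) \<and> (\<forall>i<n. \<bar>xs ! Suc i - xs ! i\<bar> = 1)}"

text \<open>b l n m = b_{n,m}(l), with m an integer so that b_{n,-1} = 0 can be expressed
  (negative m gives 0).\<close>
fun bseq :: "nat \<Rightarrow> nat \<Rightarrow> int \<Rightarrow> nat" where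
  "bseq l 0 m =
     (if m < 0 then 0
      else if m mod int l = int l - 1 then path_count 0 (nat m)
      else if m = 0 then 1 else 0)"
| "bseq l (Suc n) m =
     (if m < 0 then 0
      else if m mod int l = int l - 1 then path_count (Suc n) (nat m)
      else if m mod int l = int l - 2 then bseq l n (m - 1)
      else bseq l n (m - 1) + bseq l n (m + 1))"

text \<open>Generating series  sum_{m >= 0, m = r mod l, n >= r} b_{n,m} x^n.  For each n the
  inner sum over m is taken over the (finite) support of m \<mapsto> b_{n,m}.\<close>
definition bgf :: "nat \<Rightarrow> nat \<Rightarrow> real fls" where
  "bgf l r = fps_to_fls (Abs_fps (\<lambda>n. if n \<ge> r then
      (\<Sum>m\<in>{m::nat. m mod l = r mod l \<and> bseq l n (int m) \<noteq> 0}. real (bseq l n (int m)))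
      else 0))"

text \<open>Rj j = R_{l-j}(x) (the recursion does not depend on l), as a Laurent series in x.\<close>
fun Rj :: "nat \<Rightarrow> real fls" where
  "Rj 0 = 0"
| "Rj (Suc 0) = 0"
| "Rj (Suc (Suc 0)) = 1"
| "Rj (Suc (Suc (Suc 0))) = fls_X_inv"
| "Rj (Suc (Suc (Suc (Suc k)))) = fls_X_inv * Rj (Suc (Suc (Suc k))) - Rj (Suc (Suc k))"

definition R :: "nat \<Rightarrow> nat \<Rightarrow> real fls" where
  "R l i = Rj (l - i)"

end

theory Submission
  imports Defs
begin

lemma path_count_zero:
  assumes "m > n" shows "path_count n m = 0"
proof -
  have e: "{xs :: int list. length xs = Suc n \<and> xs ! 0 = 0 \<and> xs ! n = int m
      \<and> (\<forall>i\<le>n. xs ! i \<ge> 0) \<and> (\<forall>i<n. \<bar>xs ! Suc i - xs ! i\<bar> = 1)} = {}"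
  proof (rule ccontr)
    assume "\<not> ?thesis"
    then obtain xs where xs: "xs ! 0 = 0" "xs ! n = int m" "\<forall>i<n. \<bar>xs ! Suc i - xs ! i\<bar> = 1"
      by blast
    have "\<forall>i. i \<le> n \<longrightarrow> xs ! i \<le> int i"
    proof
      fix i show "i \<le> n \<longrightarrow> xs ! i \<le> int i"
      proof (induction i)
        case 0 then show ?case using xs by simp
      next
        case (Suc i) then show ?case using xs(3) by (smt (verit) Suc_le_lessD less_imp_le_nat of_nat_Suc)
      qed
    qed
    then have "xs ! n \<le> int n" by simp
    then show False using xs assms by simp
  qed
  then show ?thesis unfolding path_count_def e by simp
qed

lemma bseq_neg: "m < 0 \<Longrightarrow> bseq l n m = 0"
  by (cases n) auto

lemma bseq_big: "m > int n \<Longrightarrow> bseq l n m = 0"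
proof (induction n arbitrary: m)
  case 0 then show ?case by (auto intro: path_count_zero)
next
  case (Suc n)
  have a: "bseq l n (m - 1) = 0" "bseq l n (m + 1) = 0" using Suc by auto
  have "nat m > Suc n" using Suc.prems by simp
  then show ?case using a Suc.prems by (auto intro: path_count_zero)
qed

lemma bseq_Suc_nat:
  assumes "l \<ge> 2"
  shows "bseq l (Suc n) (int m) = (if m mod l = l-1 then path_count (Suc n) m
     else if m mod l = l-2 then bseq l n (int m - 1) else bseq l n (int m - 1) + bseq l n (int m + 1))"
proof -
  have e1: "(int m mod int l = int l - 1) = (m mod l = l - 1)" using assms
    by (metis of_nat_1 of_nat_diff of_nat_eq_iff of_nat_mod one_le_numeral order.trans)
  have e2: "(int m mod int l = int l - 2) = (m mod l = l - 2)" using assms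
    by (metis of_nat_diff of_nat_eq_iff of_nat_mod of_nat_numeral)
  show ?thesis using e1 e2 by simp
qed

definition fb :: "nat \<Rightarrow> nat \<Rightarrow> nat \<Rightarrow> nat \<Rightarrow> real" where
  "fb l r n m = (if m mod l = r then real (bseq l n (int m)) else 0)"

definition T :: "nat \<Rightarrow> nat \<Rightarrow> nat \<Rightarrow> real" where
  "T l r n = (\<Sum>m<Suc n. fb l r n m)"

lemma T_bound:
  assumes "K \<ge> Suc n" shows "(\<Sum>m<K. fb l r n m) = T l r n"
proof -
  have "(\<Sum>m<K. fb l r n m) = (\<Sum>m<Suc n. fb l r n m)"
    by (rule sum.mono_neutral_right) (use assms in \<open>auto simp: fb_def bseq_big\<close>)
  then show ?thesis by (simp add: T_def)
qed

lemma bgf_T: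
  assumes "r < l"
  shows "bgf l r = fps_to_fls (Abs_fps (T l r))"
proof -
  have "(if n \<ge> r then
      (\<Sum>m\<in>{m::nat. m mod l = r mod l \<and> bseq l n (int m) \<noteq> 0}. real (bseq l n (int m)))
      else 0) = T l r n" for n
  proof (cases "n \<ge> r")
    case True
    have "T l r n = (\<Sum>m\<in>{m\<in>{..<Suc n}. m mod l = r}. real (bseq l n (int m)))"
      unfolding T_def fb_def by (subst sum.inter_filter) (simp_all del: sum.lessThan_Suc)
    also have "\<dots> = (\<Sum>m\<in>{m::nat. m mod l = r mod l \<and> bseq l n (int m) \<noteq> 0}. real (bseq l n (int m)))"
    proof (rule sum.mono_neutral_right)
      show "finite {m \<in> {..<Suc n}. m mod l = r}" by simp
      show "{m. m mod l = r mod l \<and> bseq l n (int m) \<noteq> 0} \<subseteq> {m \<in> {..<Suc n}. m mod l = r}"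
      proof
        fix m assume m: "m \<in> {m. m mod l = r mod l \<and> bseq l n (int m) \<noteq> 0}"
        have "\<not> int m > int n" using m bseq_big[of n "int m" l] by auto
        then show "m \<in> {m \<in> {..<Suc n}. m mod l = r}" using m assms by simp
      qed
      show "\<forall>i\<in>{m \<in> {..<Suc n}. m mod l = r} - {m. m mod l = r mod l \<and> bseq l n (int m) \<noteq> 0}.
          real (bseq l n (int i)) = 0" using assms by auto
    qed
    finally show ?thesis using True by simp
  next
    case False
    have "fb l r n m = 0" if "m < Suc n" for m
    proof -
      have "m < r" using False that by simp
      then have "m mod l \<noteq> r" by (metis mod_less_eq_dividend not_le)
      then show ?thesis by (simp add: fb_def)
    qed
    then show ?thesis using False by (simp add: T_def)
  qed
  then show ?thesis unfolding bgf_def by simp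
qed

lemma sum_shift0: "(\<Sum>m<Suc k. g m) = g 0 + (\<Sum>m<k. g (Suc m))"
  by (rule sum.lessThan_Suc_shift)

lemma T_gen:
  assumes "l \<ge> 2" "Suc (Suc r) < l - 1"
  shows "T l (Suc r) (Suc n) = T l r n + T l (Suc (Suc r)) n"
proof -
  have pt: "fb l (Suc r) (Suc n) m = (if m = 0 then 0 else fb l r n (m - 1)) + fb l (Suc (Suc r)) n (Suc m)" for m
  proof (cases m)
    case 0 then show ?thesis using assms by (simp add: fb_def)
  next
    case (Suc k)
    have i1: "(Suc k mod l = Suc r) = (k mod l = r)" using assms
      by (auto simp: mod_Suc)
    have i2: "(Suc (Suc k) mod l = Suc (Suc r)) = (Suc k mod l = Suc r)" using assms
      by (auto simp: mod_Suc)
    have i3: "Suc k mod l \<noteq> l - 1" "Suc k mod l \<noteq> l - 2" if "Suc k mod l = Suc r" using assms that by auto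
    have c: "bseq l (Suc n) (int (Suc k)) = bseq l n (int k) + bseq l n (int (Suc (Suc k)))"
      if "Suc k mod l = Suc r"
      using bseq_Suc_nat[OF assms(1), of n "Suc k"] i3[OF that] that by (simp del: bseq.simps add: algebra_simps)
    show ?thesis using Suc i1 i2 c
      by (simp add: fb_def del: bseq.simps)
  qed
  have "T l (Suc r) (Suc n) = (\<Sum>m<Suc (Suc n). fb l (Suc r) (Suc n) m)" by (simp add: T_def)
  also have "\<dots> = (\<Sum>m<Suc (Suc n). (if m = 0 then 0 else fb l r n (m - 1)))
      + (\<Sum>m<Suc (Suc n). fb l (Suc (Suc r)) n (Suc m))"
    by (simp add: pt sum.distrib del: sum.lessThan_Suc)
  also have "(\<Sum>m<Suc (Suc n). (if m = 0 then 0 else fb l r n (m - 1))) = T l r n"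
    by (subst sum_shift0) (simp add: T_def del: sum.lessThan_Suc)
  also have "(\<Sum>m<Suc (Suc n). fb l (Suc (Suc r)) n (Suc m)) = T l (Suc (Suc r)) n"
  proof -
    have "(\<Sum>m<Suc (Suc (Suc n)). fb l (Suc (Suc r)) n m) = fb l (Suc (Suc r)) n 0 + (\<Sum>m<Suc (Suc n). fb l (Suc (Suc r)) n (Suc m))"
      by (rule sum_shift0)
    moreover have "fb l (Suc (Suc r)) n 0 = 0" using assms by (simp add: fb_def)
    moreover have "(\<Sum>m<Suc (Suc (Suc n)). fb l (Suc (Suc r)) n m) = T l (Suc (Suc r)) n"
      by (rule T_bound) simp
    ultimately show ?thesis by simp
  qed
  finally show ?thesis .
qed

lemma T_top:
  assumes "l \<ge> 3"
  shows "T l (l - 2) (Suc n) = T l (l - 3) n"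
proof -
  have pt: "fb l (l - 2) (Suc n) m = (if m = 0 then 0 else fb l (l - 3) n (m - 1))" for m
  proof (cases m)
    case 0 then show ?thesis using assms by (simp add: fb_def)
  next
    case (Suc k)
    have i1: "(Suc k mod l = l - 2) = (k mod l = l - 3)" using assms
      by (auto simp: mod_Suc)
    have i3: "Suc k mod l \<noteq> l - 1" if "Suc k mod l = l - 2" using assms that by auto
    have c: "bseq l (Suc n) (int (Suc k)) = bseq l n (int k)"
      if "Suc k mod l = l - 2"
      using bseq_Suc_nat[of l n "Suc k"] i3[OF that] that assms by (simp del: bseq.simps)
    show ?thesis using Suc i1 c
      by (simp add: fb_def del: bseq.simps)
  qed
  have "T l (l - 2) (Suc n) = (\<Sum>m<Suc (Suc n). (if m = 0 then 0 else fb l (l - 3) n (m - 1)))"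
    by (simp add: T_def pt del: sum.lessThan_Suc)
  also have "\<dots> = T l (l - 3) n"
    by (subst sum_shift0) (simp add: T_def del: sum.lessThan_Suc)
  finally show ?thesis .
qed

lemma T_zero:
  assumes "r \<ge> 1" "r < l" shows "T l r 0 = 0"
  using assms by (simp add: T_def fb_def)

definition G :: "nat \<Rightarrow> nat \<Rightarrow> real fls" where
  "G l r = fps_to_fls (Abs_fps (T l r))"

lemma X_ne: "(fls_X :: real fls) \<noteq> 0"
  by (metis fls_X_nonzero)

lemma G_gen:
  assumes "l \<ge> 2" "Suc (Suc r) < l - 1"
  shows "G l r = fls_X_inv * G l (Suc r) - G l (Suc (Suc r))"
proof -
  have "Abs_fps (T l (Suc r)) = fps_X * (Abs_fps (T l r) + Abs_fps (T l (Suc (Suc r))))"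
  proof (rule fps_ext)
    fix n show "Abs_fps (T l (Suc r)) $ n = (fps_X * (Abs_fps (T l r) + Abs_fps (T l (Suc (Suc r))))) $ n"
      using assms by (cases n) (auto simp: T_gen T_zero)
  qed
  then have "G l (Suc r) = fls_X * (G l r + G l (Suc (Suc r)))"
    unfolding G_def by (simp add: fls_times_fps_to_fls)
  then have "inverse fls_X * G l (Suc r) = (inverse fls_X * fls_X) * (G l r + G l (Suc (Suc r)))"
    by (simp only: mult.assoc)
  also have "inverse fls_X * fls_X = (1 :: real fls)" by (rule left_inverse[OF X_ne])
  finally have "inverse fls_X * G l (Suc r) = G l r + G l (Suc (Suc r))" by simp
  then show ?thesis by (simp only: fls_inverse_X) (simp add: algebra_simps)
qed

lemma G_top:
  assumes "l \<ge> 3"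
  shows "G l (l - 3) = fls_X_inv * G l (l - 2)"
proof -
  have "Abs_fps (T l (l - 2)) = fps_X * Abs_fps (T l (l - 3))"
  proof (rule fps_ext)
    fix n show "Abs_fps (T l (l - 2)) $ n = (fps_X * Abs_fps (T l (l - 3))) $ n"
      using assms by (cases n) (auto simp: T_top T_zero)
  qed
  then have "G l (l - 2) = fls_X * G l (l - 3)"
    unfolding G_def by (simp add: fls_times_fps_to_fls)
  then have "inverse fls_X * G l (l - 2) = (inverse fls_X * fls_X) * G l (l - 3)"
    by (simp only: mult.assoc)
  also have "inverse fls_X * fls_X = (1 :: real fls)" by (rule left_inverse[OF X_ne])
  finally have "inverse fls_X * G l (l - 2) = G l (l - 3)" by simp
  then show ?thesis by (simp only: fls_inverse_X)
qed

lemma Rj3: "Rj 3 = fls_X_inv" by (simp add: numeral_3_eq_3)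
lemma Rj2: "Rj 2 = 1" by (simp add: numeral_2_eq_2)

lemma G_Rj:
  assumes "l \<ge> 2" shows "2 \<le> k \<Longrightarrow> k \<le> l \<Longrightarrow> G l (l - k) = Rj k * G l (l - 2)"
proof (induction k rule: less_induct)
  case (less k)
  show ?case
  proof (cases "k \<le> 3")
    case True
    then have "k = 2 \<or> k = 3" using less.prems by auto
    then show ?thesis
    proof
      assume "k = 2" then show ?thesis by (simp only: Rj2 mult_1_left)
    next
      assume k3: "k = 3"
      then have "l \<ge> 3" using less.prems by simp
      then show ?thesis using G_top[of l] unfolding k3 Rj3 by simp
    qed
  next
    case False
    obtain k' where k: "k = Suc (Suc (Suc (Suc k')))"
    proof -
      have "k = Suc (Suc (Suc (Suc (k - 4))))" using False by simp
      then show ?thesis using that by blast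
    qed
    have IH1: "G l (l - Suc (Suc (Suc k'))) = Rj (Suc (Suc (Suc k'))) * G l (l - 2)"
      by (rule less.IH) (use less.prems k in simp_all)
    have IH2: "G l (l - Suc (Suc k')) = Rj (Suc (Suc k')) * G l (l - 2)"
      by (rule less.IH) (use less.prems k in simp_all)
    have g: "G l (l - k) = fls_X_inv * G l (Suc (l - k)) - G l (Suc (Suc (l - k)))"
      by (rule G_gen[OF assms]) (use less.prems k in simp)
    have e1: "Suc (l - k) = l - Suc (Suc (Suc k'))" and e2: "Suc (l - Suc (Suc (Suc k'))) = l - Suc (Suc k')"
      using less.prems k by simp_all
    have "G l (l - k) = (fls_X_inv * Rj (Suc (Suc (Suc k'))) - Rj (Suc (Suc k'))) * G l (l - 2)"
      using g by (simp only: e1 e2 IH1 IH2 left_diff_distrib mult.assoc)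
    then show ?thesis unfolding k by (simp only: Rj.simps)
  qed
qed

lemma Rj_cheb:
  "2 \<le> k \<Longrightarrow> Rj k = cheb_U (k - 2) (inverse (2 * fls_X))"
proof (induction k rule: less_induct)
  case (less k)
  have two: "2 * inverse (2 * (fls_X :: real fls)) = fls_X_inv"
  proof -
    have "(2 :: real fls) \<noteq> 0" by (metis fls_const_nonzero fls_const_numeral zero_neq_numeral)
    then show ?thesis using X_ne by (simp add: fls_inverse_X[symmetric] field_simps)
  qed
  show ?case
  proof (cases "k \<le> 3")
    case True
    then have "k = 2 \<or> k = 3" using less.prems by auto
    then show ?thesis
    proof
      assume "k = 2" then show ?thesis by (simp add: numeral_2_eq_2)
    next
      assume "k = 3" then show ?thesis using two by (simp add: numeral_3_eq_3)
    qed
  next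
    case False
    then obtain k' where k: "k = Suc (Suc (Suc (Suc k')))"
    proof -
      have "k = Suc (Suc (Suc (Suc (k - 4))))" using False by simp
      then show ?thesis using that by blast
    qed
    have IH1: "Rj (Suc (Suc (Suc k'))) = cheb_U (Suc k') (inverse (2 * fls_X))"
      using less k by auto
    have IH2: "Rj (Suc (Suc k')) = cheb_U k' (inverse (2 * fls_X))"
      using less k by auto
    have "Rj k = fls_X_inv * Rj (Suc (Suc (Suc k'))) - Rj (Suc (Suc k'))" by (simp only: k Rj.simps)
    also have "\<dots> = 2 * inverse (2 * fls_X) * cheb_U (Suc k') (inverse (2 * fls_X)) - cheb_U k' (inverse (2 * fls_X))"
      by (simp only: IH1 IH2 two)
    also have "\<dots> = cheb_U (k - 2) (inverse (2 * fls_X))" by (simp only: k cheb_U.simps diff_Suc_Suc diff_zero numeral_2_eq_2)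
    finally show ?thesis .
  qed
qed

theorem lemma2p9:
  fixes l j :: nat
  assumes "l \<ge> 2" and "2 \<le> j" and "j \<le> l"
  shows "R l (l - j) = cheb_U (j - 2) (inverse (2 * fls_X))
    \<and> bgf l (l - j) = cheb_U (j - 2) (inverse (2 * fls_X)) * bgf l (l - 2)"
proof -
  have r: "R l (l - j) = Rj j" using assms by (simp add: R_def)
  have "bgf l (l - j) = G l (l - j)" "bgf l (l - 2) = G l (l - 2)"
    using assms by (simp_all add: bgf_T G_def)
  then show ?thesis using r G_Rj[OF assms(1) assms(2,3)] Rj_cheb[OF assms(2)] by simp
qed

end
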